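(* Let $\mathfrak g=\mathfrak w_6$ be the real Lie algebra with basis $X_1,X_2,X_3,X_4,Z_1,Z_2$ whose only nonzero brackets (up to antisymmetry) are $[X_1,X_3]=-\frac12Z_1$, $[X_1,X_4]=-\frac12Z_2$, $[X_2,X_3]=-\frac12Z_2$, $[X_2,X_4]=\frac12Z_1$, with the abelian complex structure $J_1$ given by $J_1X_1=X_2$, $J_1X_3=-X_4$, $J_1Z_1=-Z_2$. Let $X=\Gamma\backslash W_6$ for a co-compact lattice $\Gamma$ in the corresponding simply connected group. With $T_1=X_1-iX_2$, $T_2=X_3+iX_4$, $W=Z_1+iZ_2$ (so $[\overline T_1,T_2]=-W$, $[\overline T_2,T_1]=\overline W$, and all other brackets among $T_1,T_2,W$ and their conjugates vanish) and dual $(1,0)$-forms $\omega^1,\omega^2,\omega^3$, write $\mu=\sum_{a,b=1}^3\mu^a_b\,\overline\omega^b\otimes e_a$ with $(e_1,e_2,e_3)=(T_1,T_2,W)$. Then: (i) $\mu$ is $\overline\partial$-closed iff $\mu^2_2=\mu^2_3=0$, and $\dim_{\mathbb C}H^1(X,\Theta_X)=6$, with harmonic representatives those closed $\mu$ with additionally $\mu^3_1=0$; (ii) a closed $\mu$ satisfies Condition A iff $\mu^1_1=\mu^1_3=0$, so the abelian deformations form a 4-dimensional subspace of $H^1(X,\Theta_X)$; (iii) for a harmonic $\mu$ the second Kuranishi term is $\phi_2=\mu^1_1\mu^3_3\,\overline\omega^2\otimes T_2$, and the deformation is integrable iff $\mu^1_3=0$, so the Kuranishi space has dimension 5.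
   Context: Condition A for $\mu$ (with $n=2$ indices $j,k\in\{1,2\}$ for $T_1,T_2$ and one central index for $W$): writing $[\overline T_k,T_j]=E_{kj}W+F_{kj}\overline W$, Condition A is $\sum_i(\mu^i_jF_{ki}-\mu^i_kF_{ji})=0$ for all $j,k\in\{1,2\}$ and $\sum_i\mu^i_3F_{ji}=0$ for all $j$, where $i$ ranges over $\{1,2\}$. The operator $\overline\partial$ on $\mathfrak g^{*(0,1)}\otimes\mathfrak g^{1,0}$ is given by $\overline\partial V=\sum_p\overline\omega^p\otimes[\overline e_p,V]^{1,0}$ for $V\in\mathfrak g^{1,0}$, $\overline\partial\overline\sigma=(d\overline\sigma)^{(0,2)}$ (which vanishes here), and $\overline\partial(\overline\sigma\otimes V)=\overline\partial\overline\sigma\otimes V-\overline\sigma\wedge\overline\partial V$; $H^1(X,\Theta_X)\cong\ker\overline\partial_1/\operatorname{im}\overline\partial_0$ computed on invariant elements, harmonic representatives being the orthogonal complement of $\operatorname{im}\overline\partial_0$ in $\ker\overline\partial_1$ for the Hermitian inner product making $\{\overline\omega^b\otimes e_a\}$ orthogonal. The Kuranishi series is $\phi_1=\mu$, $\phi_r=\frac12\sum_{s<r}\overline\partial^*\mathcal G\{\phi_s,\phi_{r-s}\}$ with $\{\cdot,\cdot\}$ the Schouten–Nijenhuis bracket; the Kuranishi space is the locus of harmonic $\mu$ near $0$ for which the resulting $\Phi=\sum\phi_r$ satisfies $\overline\partial\Phi+\frac12\{\Phi,\Phi\}=0$. *)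

theory Defs
  imports "HOL-Analysis.Analysis"
begin

section \<open>The real Lie algebra w6 and its complexification\<close>

datatype rb = X1 | X2 | X3 | X4 | Z1 | Z2

lemma UNIV_rb: "(UNIV :: rb set) = {X1, X2, X3, X4, Z1, Z2}"
  by (auto intro: rb.exhaust)

instance rb :: finite
  by standard (simp add: UNIV_rb)

text \<open>Index set {1,2,3} for the (1,0)-frame (T1, T2, W).\<close>
datatype i3 = I1 | I2 | I3

lemma UNIV_i3: "(UNIV :: i3 set) = {I1, I2, I3}"
  by (auto intro: i3.exhaust)

instance i3 :: finite
  by standard (simp add: UNIV_i3)

definition rvec :: "rb \<Rightarrow> real ^ rb" where
  "rvec k = (\<chi> j. if j = k then 1 else 0)"

definition w6_br0 :: "rb \<Rightarrow> rb \<Rightarrow> real ^ rb" where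
  "w6_br0 p q =
     (if (p, q) = (X1, X3) then (-1/2) *\<^sub>R rvec Z1
      else if (p, q) = (X1, X4) then (-1/2) *\<^sub>R rvec Z2
      else if (p, q) = (X2, X3) then (-1/2) *\<^sub>R rvec Z2
      else if (p, q) = (X2, X4) then (1/2) *\<^sub>R rvec Z1
      else 0)"

definition w6_br :: "rb \<Rightarrow> rb \<Rightarrow> real ^ rb" where
  "w6_br p q = w6_br0 p q - w6_br0 q p"

text \<open>Complex structure J1 on basis vectors: J1 X1 = X2, J1 X3 = -X4, J1 Z1 = -Z2
  (and hence, as J1^2 = -1, J1 X2 = -X1, J1 X4 = X3, J1 Z2 = Z1).\<close>
definition J1b :: "rb \<Rightarrow> real ^ rb" where
  "J1b p = (case p of X1 \<Rightarrow> rvec X2 | X2 \<Rightarrow> - rvec X1 | X3 \<Rightarrow> - rvec X4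
             | X4 \<Rightarrow> rvec X3 | Z1 \<Rightarrow> - rvec Z2 | Z2 \<Rightarrow> rvec Z1)"

text \<open>Complexification g_C = complex^rb; complex-bilinear bracket and complex-linear J.\<close>
definition cbr :: "complex ^ rb \<Rightarrow> complex ^ rb \<Rightarrow> complex ^ rb" where
  "cbr u v = (\<chi> k. \<Sum>p\<in>UNIV. \<Sum>q\<in>UNIV. u $ p * v $ q * complex_of_real (w6_br p q $ k))"

definition cJ :: "complex ^ rb \<Rightarrow> complex ^ rb" where
  "cJ u = (\<chi> k. \<Sum>p\<in>UNIV. u $ p * complex_of_real (J1b p $ k))"

definition cvec :: "rb \<Rightarrow> complex ^ rb" where
  "cvec k = (\<chi> j. if j = k then 1 else 0)"

definition vconj :: "complex ^ rb \<Rightarrow> complex ^ rb" where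
  "vconj u = (\<chi> k. cnj (u $ k))"

text \<open>The (1,0)-frame e1 = T1 = X1 - i X2, e2 = T2 = X3 + i X4, e3 = W = Z1 + i Z2,
  and its conjugate (0,1)-frame.\<close>
definition e :: "i3 \<Rightarrow> complex ^ rb" where
  "e a = (case a of I1 \<Rightarrow> cvec X1 - \<i> *s cvec X2
                  | I2 \<Rightarrow> cvec X3 + \<i> *s cvec X4
                  | I3 \<Rightarrow> cvec Z1 + \<i> *s cvec Z2)"

definition eb :: "i3 \<Rightarrow> complex ^ rb" where
  "eb a = vconj (e a)"

definition fr :: "bool \<Rightarrow> i3 \<Rightarrow> complex ^ rb" where
  "fr s a = (if s then eb a else e a)"

text \<open>Dual (1,0)-forms omega^a and (0,1)-forms conj omega^a (explicit formulas; the duality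
  with the frame is part of the main theorem).\<close>
definition \<omega> :: "i3 \<Rightarrow> complex ^ rb \<Rightarrow> complex" where
  "\<omega> a v = (case a of I1 \<Rightarrow> (v $ X1 + \<i> * v $ X2) / 2
                    | I2 \<Rightarrow> (v $ X3 - \<i> * v $ X4) / 2
                    | I3 \<Rightarrow> (v $ Z1 - \<i> * v $ Z2) / 2)"

definition \<omega>b :: "i3 \<Rightarrow> complex ^ rb \<Rightarrow> complex" where
  "\<omega>b a v = cnj (\<omega> a (vconj v))"

section \<open>Invariant Dolbeault complex with values in g^{1,0}\<close>

text \<open>Elements of g^{1,0}: coordinates v (V = sum v_a e_a).
  Elements of g^{*(0,1)} \<otimes> g^{1,0}: mu $ (a,b) = coefficient mu^a_b of conj(omega^b) \<otimes> e_a.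
  Elements of g^{*(0,2)} \<otimes> g^{1,0}: alternating arrays psi a c d = e-coordinate a of
  psi(conj e_c, conj e_d); similarly (0,3) with psi a c d f.
  Convention: (alpha \<and> beta)(X,Y) = alpha X beta Y - alpha Y beta X.\<close>

type_synonym A0 = "complex ^ i3"
type_synonym A1 = "complex ^ (i3 \<times> i3)"
type_synonym A2 = "i3 \<Rightarrow> i3 \<Rightarrow> i3 \<Rightarrow> complex"
type_synonym A3 = "i3 \<Rightarrow> i3 \<Rightarrow> i3 \<Rightarrow> i3 \<Rightarrow> complex"

definition vec10 :: "A0 \<Rightarrow> complex ^ rb" where
  "vec10 v = (\<Sum>a\<in>UNIV. (v $ a) *s e a)"

definition kron :: "i3 \<Rightarrow> i3 \<Rightarrow> complex" where
  "kron x y = (if x = y then 1 else 0)"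

text \<open>dbar e_a = sum_p conj(omega^p) \<otimes> [conj e_p, e_a]^{1,0}; Dbe a a' p is its coefficient
  of conj(omega^p) \<otimes> e_{a'}.\<close>
definition Dbe :: "i3 \<Rightarrow> i3 \<Rightarrow> i3 \<Rightarrow> complex" where
  "Dbe a a' p = \<omega> a' (cbr (eb p) (e a))"

text \<open>(0,2)-part of d conj(omega^b) for the invariant form: d alpha(X,Y) = - alpha([X,Y]).\<close>
definition dform1 :: "i3 \<Rightarrow> i3 \<Rightarrow> i3 \<Rightarrow> complex" where
  "dform1 b c d = - \<omega>b b (cbr (eb c) (eb d))"

text \<open>(0,3)-part of d of an invariant (0,2)-form sigma (given as alternating array):
  d sigma(X,Y,Z) = - sigma([X,Y],Z) + sigma([X,Z],Y) - sigma([Y,Z],X).\<close>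
definition form2_app :: "(i3 \<Rightarrow> i3 \<Rightarrow> complex) \<Rightarrow> complex ^ rb \<Rightarrow> i3 \<Rightarrow> complex" where
  "form2_app \<sigma> Y d = (\<Sum>c\<in>UNIV. \<omega>b c Y * \<sigma> c d)"

definition dform2 :: "(i3 \<Rightarrow> i3 \<Rightarrow> complex) \<Rightarrow> i3 \<Rightarrow> i3 \<Rightarrow> i3 \<Rightarrow> complex" where
  "dform2 \<sigma> x y z = - form2_app \<sigma> (cbr (eb x) (eb y)) z + form2_app \<sigma> (cbr (eb x) (eb z)) y
                    - form2_app \<sigma> (cbr (eb y) (eb z)) x"

definition dbar0 :: "A0 \<Rightarrow> A1" where
  "dbar0 v = (\<chi> i. \<omega> (fst i) (cbr (eb (snd i)) (vec10 v)))"

text \<open>dbar_1(conj sigma \<otimes> V) = dbar(conj sigma) \<otimes> V - conj sigma \<and> dbar V, extended linearly.\<close>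
definition dbar1 :: "A1 \<Rightarrow> A2" where
  "dbar1 \<mu> = (\<lambda>a' c d. \<Sum>a\<in>UNIV. \<Sum>b\<in>UNIV. \<mu> $ (a, b) *
      (dform1 b c d * kron a a' - (kron b c * Dbe a a' d - kron b d * Dbe a a' c)))"

text \<open>dbar_2(conj sigma \<otimes> V) = dbar(conj sigma) \<otimes> V + conj sigma \<and> dbar V for a (0,2)-form sigma;
  psi = (1/2) sum_{a,b,c} psi a b c conj(omega^b) \<and> conj(omega^c) \<otimes> e_a.\<close>
definition wedge21 :: "(i3 \<Rightarrow> i3 \<Rightarrow> complex) \<Rightarrow> (i3 \<Rightarrow> complex) \<Rightarrow> i3 \<Rightarrow> i3 \<Rightarrow> i3 \<Rightarrow> complex" where
  "wedge21 \<sigma> \<tau> x y z = \<sigma> x y * \<tau> z - \<sigma> x z * \<tau> y + \<sigma> y z * \<tau> x"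

definition dbar2 :: "A2 \<Rightarrow> A3" where
  "dbar2 \<psi> = (\<lambda>a' x y z. \<Sum>a\<in>UNIV. \<Sum>b\<in>UNIV. \<Sum>c\<in>UNIV. (1/2) * \<psi> a b c *
      (dform2 (\<lambda>p q. kron b p * kron c q - kron b q * kron c p) x y z * kron a a'
       + wedge21 (\<lambda>p q. kron b p * kron c q - kron b q * kron c p) (\<lambda>p. Dbe a a' p) x y z))"

definition alt2 :: "A2 \<Rightarrow> bool" where
  "alt2 \<psi> \<longleftrightarrow> (\<forall>a c d. \<psi> a c d = - \<psi> a d c)"

definition alt3 :: "A3 \<Rightarrow> bool" where
  "alt3 \<chi>' \<longleftrightarrow> (\<forall>a x y z. \<chi>' a x y z = - \<chi>' a y x z \<and> \<chi>' a x y z = - \<chi>' a x z y)"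

text \<open>Hermitian inner products (linear in the first argument) for which the elements
  e_a, conj(omega^b) \<otimes> e_a, conj(omega^{b}) \<and> conj(omega^c) \<otimes> e_a (b<c), ... are orthonormal.\<close>
definition ip0 :: "A0 \<Rightarrow> A0 \<Rightarrow> complex" where
  "ip0 v w = (\<Sum>a\<in>UNIV. v $ a * cnj (w $ a))"

definition ip1 :: "A1 \<Rightarrow> A1 \<Rightarrow> complex" where
  "ip1 \<mu> \<nu> = (\<Sum>i\<in>UNIV. \<mu> $ i * cnj (\<nu> $ i))"

definition ip2 :: "A2 \<Rightarrow> A2 \<Rightarrow> complex" where
  "ip2 \<psi> \<chi>' = (1/2) * (\<Sum>a\<in>UNIV. \<Sum>c\<in>UNIV. \<Sum>d\<in>UNIV. \<psi> a c d * cnj (\<chi>' a c d))"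

definition ip3 :: "A3 \<Rightarrow> A3 \<Rightarrow> complex" where
  "ip3 \<psi> \<chi>' = (1/6) * (\<Sum>a\<in>UNIV. \<Sum>x\<in>UNIV. \<Sum>y\<in>UNIV. \<Sum>z\<in>UNIV. \<psi> a x y z * cnj (\<chi>' a x y z))"

definition dbar0_adj :: "A1 \<Rightarrow> A0" where
  "dbar0_adj \<mu> = (THE v. \<forall>w. ip0 w v = ip1 (dbar0 w) \<mu>)"

definition dbar1_adj :: "A2 \<Rightarrow> A1" where
  "dbar1_adj \<psi> = (THE \<mu>. \<forall>\<nu>. ip1 \<nu> \<mu> = ip2 (dbar1 \<nu>) \<psi>)"

definition dbar2_adj :: "A3 \<Rightarrow> A2" where
  "dbar2_adj \<chi>' = (THE \<psi>. alt2 \<psi> \<and> (\<forall>\<phi>. alt2 \<phi> \<longrightarrow> ip2 \<phi> \<psi> = ip3 (dbar2 \<phi>) \<chi>'))"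

definition lap2 :: "A2 \<Rightarrow> A2" where
  "lap2 \<psi> = (\<lambda>a c d. dbar1 (dbar1_adj \<psi>) a c d + dbar2_adj (dbar2 \<psi>) a c d)"

definition harm2 :: "A2 set" where
  "harm2 = {\<psi>. alt2 \<psi> \<and> lap2 \<psi> = (\<lambda>_ _ _. 0)}"

definition Hproj2 :: "A2 \<Rightarrow> A2" where
  "Hproj2 \<psi> = (THE h. h \<in> harm2 \<and> (\<forall>k\<in>harm2. ip2 (\<lambda>a c d. \<psi> a c d - h a c d) k = 0))"

definition Green2 :: "A2 \<Rightarrow> A2" where
  "Green2 \<psi> = (THE \<eta>. alt2 \<eta> \<and> (\<forall>k\<in>harm2. ip2 \<eta> k = 0) \<and>
                      lap2 \<eta> = (\<lambda>a c d. \<psi> a c d - Hproj2 \<psi> a c d))"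

section \<open>Schouten--Nijenhuis bracket\<close>

text \<open>An element phi of g^{*(0,1)} \<otimes> g^{1,0} acting on g_C (extended by zero on g^{1,0}).\<close>
definition app1 :: "A1 \<Rightarrow> complex ^ rb \<Rightarrow> complex ^ rb" where
  "app1 \<phi> Y = (\<Sum>b\<in>UNIV. \<Sum>a\<in>UNIV. (\<omega>b b Y * \<phi> $ (a, b)) *s e a)"

text \<open>Bracket of two g^{1,0}-valued (0,1)-forms (Froelicher--Nijenhuis form of the
  Schouten--Nijenhuis bracket), evaluated on conj e_c, conj e_d.\<close>
definition SN :: "A1 \<Rightarrow> A1 \<Rightarrow> A2" where
  "SN \<phi> \<psi> = (\<lambda>a c d. \<omega> a (
       cbr (app1 \<phi> (eb c)) (app1 \<psi> (eb d)) + cbr (app1 \<psi> (eb c)) (app1 \<phi> (eb d))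
     - app1 \<phi> (cbr (app1 \<psi> (eb c)) (eb d) + cbr (eb c) (app1 \<psi> (eb d)))
     - app1 \<psi> (cbr (app1 \<phi> (eb c)) (eb d) + cbr (eb c) (app1 \<phi> (eb d)))
     + app1 \<phi> (app1 \<psi> (cbr (eb c) (eb d))) + app1 \<psi> (app1 \<phi> (cbr (eb c) (eb d)))))"

section \<open>Harmonic elements, H^1, Condition A, Kuranishi series\<close>

definition closed1 :: "A1 \<Rightarrow> bool" where
  "closed1 \<mu> \<longleftrightarrow> dbar1 \<mu> = (\<lambda>_ _ _. 0)"

definition harmonic1 :: "A1 \<Rightarrow> bool" where
  "harmonic1 \<mu> \<longleftrightarrow> closed1 \<mu> \<and> (\<forall>v. ip1 \<mu> (dbar0 v) = 0)"

text \<open>Complex dimension of the image in H^1 = ker dbar_1 / im dbar_0 of a set S of closed elements.\<close>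
definition dim_in_H1 :: "A1 set \<Rightarrow> nat" where
  "dim_in_H1 S = vec.dim {x + y | x y. x \<in> S \<and> y \<in> range dbar0} - vec.dim (range dbar0)"

definition dim_H1 :: nat where
  "dim_H1 = dim_in_H1 {\<mu>. closed1 \<mu>}"

text \<open>[conj T_k, T_j] = E_kj W + F_kj conj W; F_kj is the conj W-coefficient.\<close>
definition Fc :: "i3 \<Rightarrow> i3 \<Rightarrow> complex" where
  "Fc k j = \<omega>b I3 (cbr (eb k) (e j))"

definition conditionA :: "A1 \<Rightarrow> bool" where
  "conditionA \<mu> \<longleftrightarrow>
     (\<forall>j\<in>{I1, I2}. \<forall>k\<in>{I1, I2}.
        (\<Sum>i\<in>{I1, I2}. \<mu> $ (i, j) * Fc k i - \<mu> $ (i, k) * Fc j i) = 0) \<and>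
     (\<forall>j\<in>{I1, I2}. (\<Sum>i\<in>{I1, I2}. \<mu> $ (i, I3) * Fc j i) = 0)"

definition dstarG :: "A2 \<Rightarrow> A1" where
  "dstarG \<psi> = dbar1_adj (Green2 \<psi>)"

text \<open>Kuranishi series phi_1 = mu, phi_r = -(1/2) sum_{0<s<r} dbar* G {phi_s, phi_{r-s}}
  (sign fixed so that Phi solves dbar Phi + 1/2 {Phi,Phi} = 0 modulo harmonic terms).\<close>
function kur :: "A1 \<Rightarrow> nat \<Rightarrow> A1" where
  "kur \<mu> r = (if r = 0 then 0 else if r = 1 then \<mu> else
      (- 1/2 :: complex) *s (\<Sum>s\<in>{1..<r}. dstarG (SN (kur \<mu> s) (kur \<mu> (r - s)))))"
  by auto
termination
  by (relation "Wellfounded.measure snd") auto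

definition integrable :: "A1 \<Rightarrow> bool" where
  "integrable \<mu> \<longleftrightarrow> summable (kur \<mu>) \<and>
     (\<forall>a c d. dbar1 (suminf (kur \<mu>)) a c d
              + (1/2) * SN (suminf (kur \<mu>)) (suminf (kur \<mu>)) a c d = 0)"

end

theory Submission
  imports Defs
begin

lemma sum_rb: "(\<Sum>p\<in>UNIV. f p) = f X1 + f X2 + f X3 + f X4 + f Z1 + f Z2"
  by (simp add: UNIV_rb add.assoc)

lemma sum_i3: "(\<Sum>p\<in>UNIV. f p) = f I1 + f I2 + f I3"
  by (simp add: UNIV_i3 add.assoc)

lemma w6_br_comp: "complex_of_real (w6_br p q $ k) =
  (if k = Z1 then (if (p,q) = (X1,X3) then -1/2 else if (p,q) = (X3,X1) then 1/2
      else if (p,q) = (X2,X4) then 1/2 else if (p,q) = (X4,X2) then -1/2 else 0)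
   else if k = Z2 then (if (p,q) = (X1,X4) then -1/2 else if (p,q) = (X4,X1) then 1/2
      else if (p,q) = (X2,X3) then -1/2 else if (p,q) = (X3,X2) then 1/2 else 0)
   else 0)"
  by (cases p; cases q; cases k; simp add: w6_br_def w6_br0_def rvec_def)

lemma cbr_coord: "cbr u v = (\<chi> k. if k = Z1 then (-1/2)*(u$X1* v$X3 - u$X3* v$X1) + (1/2)*(u$X2* v$X4 - u$X4* v$X2)
   else if k = Z2 then (-1/2)*(u$X1* v$X4 - u$X4* v$X1) + (-1/2)*(u$X2* v$X3 - u$X3* v$X2) else 0)"
  unfolding cbr_def vec_eq_iff
  by (auto simp: sum_rb w6_br_comp algebra_simps)

lemma all_rb: "(\<forall>k::rb. P k) \<longleftrightarrow> P X1 \<and> P X2 \<and> P X3 \<and> P X4 \<and> P Z1 \<and> P Z2"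
  by (metis rb.exhaust)

lemma all_i3: "(\<forall>k::i3. P k) \<longleftrightarrow> P I1 \<and> P I2 \<and> P I3"
  by (metis i3.exhaust)

lemma e_comp: "e a $ k = (case a of
    I1 \<Rightarrow> (if k = X1 then 1 else if k = X2 then - \<i> else 0)
  | I2 \<Rightarrow> (if k = X3 then 1 else if k = X4 then \<i> else 0)
  | I3 \<Rightarrow> (if k = Z1 then 1 else if k = Z2 then \<i> else 0))"
  by (cases a; cases k; simp add: e_def cvec_def)

lemma eb_comp: "eb a $ k = (case a of
    I1 \<Rightarrow> (if k = X1 then 1 else if k = X2 then \<i> else 0)
  | I2 \<Rightarrow> (if k = X3 then 1 else if k = X4 then - \<i> else 0)
  | I3 \<Rightarrow> (if k = Z1 then 1 else if k = Z2 then - \<i> else 0))"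
  by (cases a; cases k; simp add: eb_def vconj_def e_comp)

lemma cbr_ee: "cbr (e a) (e b) = 0"
  by (cases a; cases b; simp add: cbr_coord e_comp vec_eq_iff all_rb)

lemma cbr_ebeb: "cbr (eb a) (eb b) = 0"
  by (cases a; cases b; simp add: cbr_coord eb_comp vec_eq_iff all_rb)

lemma cbr_ebe: "cbr (eb a) (e b) = (if a = I1 \<and> b = I2 then - e I3 else if a = I2 \<and> b = I1 then eb I3 else 0)"
  by (cases a; cases b; simp add: cbr_coord eb_comp e_comp vec_eq_iff all_rb; algebra)

lemma cbr_eeb: "cbr (e a) (eb b) = (if a = I2 \<and> b = I1 then e I3 else if a = I1 \<and> b = I2 then - eb I3 else 0)"
  by (cases a; cases b; simp add: cbr_coord eb_comp e_comp vec_eq_iff all_rb; algebra)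


lemma cbr_add1: "cbr (u + w) v = cbr u v + cbr w v"
  by (simp add: cbr_coord vec_eq_iff algebra_simps)
lemma cbr_add2: "cbr v (u + w) = cbr v u + cbr v w"
  by (simp add: cbr_coord vec_eq_iff algebra_simps)
lemma cbr_diff1: "cbr (u - w) v = cbr u v - cbr w v"
  by (simp add: cbr_coord vec_eq_iff algebra_simps)
lemma cbr_diff2: "cbr v (u - w) = cbr v u - cbr v w"
  by (simp add: cbr_coord vec_eq_iff algebra_simps)
lemma cbr_smult1: "cbr (c *s u) v = c *s cbr u v"
  by (simp add: cbr_coord vec_eq_iff algebra_simps)
lemma cbr_smult2: "cbr v (c *s u) = c *s cbr v u"
  by (simp add: cbr_coord vec_eq_iff algebra_simps)
lemma cbr_zero1: "cbr 0 v = 0"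
  by (simp add: cbr_coord vec_eq_iff)
lemma cbr_zero2: "cbr v 0 = 0"
  by (simp add: cbr_coord vec_eq_iff)
lemma cbr_neg1: "cbr (- u) v = - cbr u v"
  by (simp add: cbr_coord vec_eq_iff algebra_simps)
lemma cbr_neg2: "cbr v (- u) = - cbr v u"
  by (simp add: cbr_coord vec_eq_iff algebra_simps)
lemma cbr_sum1: "cbr (\<Sum>x\<in>(UNIV::i3 set). f x) v = (\<Sum>x\<in>UNIV. cbr (f x) v)"
  by (simp add: sum_i3 cbr_add1)
lemma cbr_sum2: "cbr v (\<Sum>x\<in>(UNIV::i3 set). f x) = (\<Sum>x\<in>UNIV. cbr v (f x))"
  by (simp add: sum_i3 cbr_add2)

lemma omega_add: "\<omega> a (u + v) = \<omega> a u + \<omega> a v"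
  by (cases a; simp add: \<omega>_def field_simps)
lemma omega_diff: "\<omega> a (u - v) = \<omega> a u - \<omega> a v"
  by (cases a; simp add: \<omega>_def field_simps)
lemma omega_smult: "\<omega> a (c *s u) = c * \<omega> a u"
  by (cases a; simp add: \<omega>_def field_simps)
lemma omega_neg: "\<omega> a (- u) = - \<omega> a u"
  by (cases a; simp add: \<omega>_def field_simps)
lemma omega_zero: "\<omega> a 0 = 0"
  by (cases a; simp add: \<omega>_def)
lemma omega_sum: "\<omega> a (\<Sum>x\<in>(UNIV::i3 set). f x) = (\<Sum>x\<in>UNIV. \<omega> a (f x))"
  by (simp add: sum_i3 omega_add)
lemma omegab_zero: "\<omega>b a 0 = 0"
  by (cases a; simp add: \<omega>b_def \<omega>_def vconj_def)
lemma omegab_add: "\<omega>b a (u + v) = \<omega>b a u + \<omega>b a v"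
  by (cases a; simp add: \<omega>b_def \<omega>_def vconj_def field_simps)
lemma omegab_smult: "\<omega>b a (c *s u) = c * \<omega>b a u"
  by (cases a; simp add: \<omega>b_def \<omega>_def vconj_def field_simps)
lemma omegab_neg: "\<omega>b a (- u) = - \<omega>b a u"
  by (cases a; simp add: \<omega>b_def \<omega>_def vconj_def field_simps)

lemma omega_e: "\<omega> a (e b) = kron a b"
  by (cases a; cases b; simp add: \<omega>_def e_comp kron_def)
lemma omega_eb: "\<omega> a (eb b) = 0"
  by (cases a; cases b; simp add: \<omega>_def eb_comp)
lemma omegab_eb: "\<omega>b a (eb b) = kron a b"
  by (cases a; cases b; simp add: \<omega>b_def \<omega>_def vconj_def eb_comp kron_def)
lemma omegab_e: "\<omega>b a (e b) = 0"
  by (cases a; cases b; simp add: \<omega>b_def \<omega>_def vconj_def e_comp)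

lemma omega_frame: "\<omega> a (\<Sum>x\<in>UNIV. f x *s e x) = f a"
  by (cases a; simp add: sum_i3 omega_add omega_smult omega_e kron_def)

lemma app1_add: "app1 \<phi> (u + v) = app1 \<phi> u + app1 \<phi> v"
  by (simp add: app1_def omegab_add algebra_simps vector_sadd_rdistrib sum.distrib)
lemma app1_smult: "app1 \<phi> (c *s u) = c *s app1 \<phi> u"
  by (simp add: app1_def omegab_smult vector_smult_assoc scalar_mult_eq_scaleR sum_distrib_left vec_eq_iff sum_component algebra_simps)
lemma app1_neg: "app1 \<phi> (- u) = - app1 \<phi> u"
  by (simp add: app1_def omegab_neg vec_eq_iff sum_component sum_negf)
lemma app1_zero: "app1 \<phi> 0 = 0"
  by (simp add: app1_def omegab_zero)
lemma app1_e: "app1 \<phi> (e a) = 0"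
  by (simp add: app1_def omegab_e)
lemma app1_eb: "app1 \<phi> (eb c) = (\<Sum>a\<in>UNIV. \<phi> $ (a, c) *s e a)"
  by (cases c; simp add: app1_def omegab_eb kron_def sum_i3)


lemma Dbe_eq: "Dbe a a' p = (if a = I2 \<and> a' = I3 \<and> p = I1 then -1 else 0)"
  by (cases a; cases a'; cases p; simp add: Dbe_def cbr_ebe omega_e omega_eb omega_neg omega_zero kron_def)

lemma dform1_eq: "dform1 b c d = 0"
  by (simp add: dform1_def cbr_ebeb omegab_zero)

lemma dbar1_eq: "dbar1 \<mu> = (\<lambda>a c d. if a = I3 then \<mu>$(I2,c) * kron d I1 - \<mu>$(I2,d) * kron c I1 else 0)"
  unfolding dbar1_def Dbe_eq dform1_eq
proof (intro ext)
  fix a c d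
  show "(\<Sum>aa\<in>UNIV. \<Sum>b\<in>UNIV. \<mu> $ (aa, b) * (0 * kron aa a - (kron b c * (if aa = I2 \<and> a = I3 \<and> d = I1 then - 1 else 0) -
          kron b d * (if aa = I2 \<and> a = I3 \<and> c = I1 then - 1 else 0)))) =
    (if a = I3 then \<mu> $ (I2, c) * kron d I1 - \<mu> $ (I2, d) * kron c I1 else 0)"
    by (cases a; cases c; cases d; simp add: sum_i3 kron_def)
qed

lemma dbar0_eq: "dbar0 v = (\<chi> i. if i = (I3, I1) then - v$I2 else 0)"
  unfolding dbar0_def vec10_def vec_eq_iff cbr_sum2 cbr_smult2 omega_sum omega_smult
  by (auto simp: all_i3 cbr_sum2 cbr_smult2 omega_sum omega_smult cbr_ebe sum_i3 omega_neg omega_e omega_eb omega_zero kron_def)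

lemma Fc_eq: "Fc k j = (if k = I2 \<and> j = I1 then 1 else 0)"
  by (cases k; cases j; simp add: Fc_def cbr_ebe omegab_e omegab_eb omegab_neg omegab_zero kron_def)

lemma app1_cbr_e_eb: "app1 \<phi> (cbr (e a) (eb b)) = (if a = I1 \<and> b = I2 then - (\<Sum>x\<in>UNIV. \<phi> $ (x, I3) *s e x) else 0)"
  by (simp add: cbr_eeb app1_e app1_neg app1_eb app1_zero)

lemma app1_cbr_eb_e: "app1 \<phi> (cbr (eb a) (e b)) = (if a = I2 \<and> b = I1 then (\<Sum>x\<in>UNIV. \<phi> $ (x, I3) *s e x) else 0)"
  by (simp add: cbr_ebe app1_e app1_neg app1_eb app1_zero)

lemma app1_sum: "app1 \<phi> (\<Sum>x\<in>(UNIV::i3 set). f x) = (\<Sum>x\<in>UNIV. app1 \<phi> (f x))"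
  by (simp add: sum_i3 app1_add)

lemma cbr_frame_e: "cbr (\<Sum>x\<in>UNIV. f x *s e x) (\<Sum>x\<in>UNIV. g x *s e x) = 0"
  by (simp add: cbr_sum1 cbr_sum2 cbr_smult1 cbr_smult2 cbr_ee)

lemma SN_eq: "SN \<phi> \<psi> = (\<lambda>a c d. - \<phi>$(a,I3) * (\<psi>$(I1,d) * kron c I2 - \<psi>$(I1,c) * kron d I2)
     - \<psi>$(a,I3) * (\<phi>$(I1,d) * kron c I2 - \<phi>$(I1,c) * kron d I2))"
proof (intro ext)
  fix a c d
  have A: "\<And>\<phi> \<psi>. app1 \<phi> (cbr (app1 \<psi> (eb c)) (eb d) + cbr (eb c) (app1 \<psi> (eb d)))
     = (\<psi>$(I1,d) * kron c I2 - \<psi>$(I1,c) * kron d I2) *s (\<Sum>x\<in>UNIV. \<phi> $ (x, I3) *s e x)"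
    unfolding app1_eb cbr_sum1 cbr_sum2 cbr_smult1 cbr_smult2 app1_add app1_sum app1_smult
          app1_cbr_e_eb app1_cbr_eb_e
    by (cases c; cases d; simp add: sum_i3 kron_def algebra_simps vector_sadd_rdistrib vector_sub_rdistrib)
  show "SN \<phi> \<psi> a c d = - \<phi>$(a,I3) * (\<psi>$(I1,d) * kron c I2 - \<psi>$(I1,c) * kron d I2)
     - \<psi>$(a,I3) * (\<phi>$(I1,d) * kron c I2 - \<phi>$(I1,c) * kron d I2)"
    unfolding SN_def A
    by (simp add: app1_eb cbr_frame_e cbr_ebeb app1_zero omega_add omega_diff omega_smult omega_frame omega_zero algebra_simps)
qed



lemma sum_i3i3: "(\<Sum>i\<in>(UNIV::(i3\<times>i3) set). f i) = (\<Sum>a\<in>UNIV. \<Sum>b\<in>UNIV. f (a,b))"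
  by (simp add: UNIV_Times_UNIV[symmetric] sum.cartesian_product del: UNIV_Times_UNIV)

lemma ip1_axis: "ip1 (axis j 1) \<mu> = cnj (\<mu> $ j)"
proof -
  have h: "(\<lambda>i. axis j 1 $ i * cnj (\<mu> $ i)) = (\<lambda>i. if i = j then cnj (\<mu> $ j) else 0)"
    by (auto simp: axis_def)
  show ?thesis unfolding ip1_def h by simp
qed

lemma ip2_self: assumes "ip2 f f = 0" shows "f = (\<lambda>_ _ _. 0)"
proof -
  let ?S = "\<Sum>a\<in>UNIV. \<Sum>c\<in>UNIV. \<Sum>d\<in>UNIV. (cmod (f a c d))^2"
  have eq: "ip2 f f = (1/2) * complex_of_real ?S"
  proof -
    have n: "\<And>z. z * cnj z = complex_of_real ((cmod z)^2)" by (metis complex_norm_square)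
    show ?thesis unfolding ip2_def n of_real_sum ..
  qed
  have "complex_of_real ?S = 0" using eq assms by (simp del: of_real_sum)
  hence "?S = 0" by (simp only: of_real_eq_0_iff)
  hence "\<forall>a c d. (cmod (f a c d))^2 = 0"
    by (simp add: sum_nonneg_eq_0_iff sum_nonneg)
  thus ?thesis by (intro ext) simp
qed

lemma ip2_diff1: "ip2 (\<lambda>a c d. f a c d - g a c d) k = ip2 f k - ip2 g k"
  by (simp add: ip2_def sum_subtractf algebra_simps)

lemma ip2_diff2: "ip2 k (\<lambda>a c d. f a c d - g a c d) = ip2 k f - ip2 k g"
  by (simp add: ip2_def sum_subtractf algebra_simps)

lemma ip2_zero2: "ip2 k (\<lambda>_ _ _. 0) = 0"
  by (simp add: ip2_def)


lemma dbar1_adj_eq: "dbar1_adj \<psi> = (\<chi> i. if fst i = I2 then (\<psi> I3 (snd i) I1 - \<psi> I3 I1 (snd i))/2 else 0)"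
  (is "_ = ?m")
proof -
  have ex: "ip1 \<nu> ?m = ip2 (dbar1 \<nu>) \<psi>" for \<nu>
  proof -
    have "ip1 \<nu> ?m = \<nu>$(I2,I2) * cnj ((\<psi> I3 I2 I1 - \<psi> I3 I1 I2)/2) + \<nu>$(I2,I3) * cnj ((\<psi> I3 I3 I1 - \<psi> I3 I1 I3)/2)"
      unfolding ip1_def by (simp add: sum_i3i3 sum_i3)
    also have "\<dots> = ip2 (dbar1 \<nu>) \<psi>"
      unfolding ip2_def dbar1_eq by (simp add: sum_i3 kron_def algebra_simps diff_divide_distrib)
    finally show ?thesis .
  qed
  have uniq: "\<mu> = ?m" if h: "\<forall>\<nu>. ip1 \<nu> \<mu> = ip2 (dbar1 \<nu>) \<psi>" for \<mu>
  proof -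
    have "cnj (\<mu> $ j) = cnj (?m $ j)" for j
    proof -
      have "ip1 (axis j 1) \<mu> = ip1 (axis j 1) ?m" using h ex by simp
      thus ?thesis by (simp only: ip1_axis)
    qed
    hence "\<mu> $ j = ?m $ j" for j by (simp only: complex_cnj_cancel_iff)
    thus ?thesis by (simp only: vec_eq_iff) blast
  qed
  show ?thesis unfolding dbar1_adj_def
  proof (rule the_equality)
    show "\<forall>\<nu>. ip1 \<nu> ?m = ip2 (dbar1 \<nu>) \<psi>" using ex by blast
    show "\<And>\<mu>. \<forall>\<nu>. ip1 \<nu> \<mu> = ip2 (dbar1 \<nu>) \<psi> \<Longrightarrow> \<mu> = ?m" by (rule uniq)
  qed
qed

lemma wedge_sum: "(\<Sum>b\<in>UNIV. \<Sum>c\<in>UNIV. (1/2) * F b c * (0 * K b c + wedge21 (\<lambda>p q. kron b p * kron c q - kron b q * kron c p) \<tau> x y z))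
   = (1/2)*((F x y - F y x) * \<tau> z - (F x z - F z x) * \<tau> y + (F y z - F z y) * \<tau> x)"
  unfolding wedge21_def
  by (cases x; cases y; cases z; simp add: sum_i3 kron_def algebra_simps)

lemma dbar2_eq: "dbar2 \<psi> = (\<lambda>a' x y z. if a' = I3 then -(1/2)*((\<psi> I2 x y - \<psi> I2 y x)*kron z I1
     - (\<psi> I2 x z - \<psi> I2 z x)*kron y I1 + (\<psi> I2 y z - \<psi> I2 z y)*kron x I1) else 0)"
proof (intro ext)
  fix a' x y z
  have d0: "dform2 \<sigma> x y z = 0" for \<sigma>
    by (simp add: dform2_def form2_app_def cbr_ebeb omegab_zero)
  have "dbar2 \<psi> a' x y z = (\<Sum>a\<in>UNIV. (1/2)*((\<psi> a x y - \<psi> a y x) * Dbe a a' z - (\<psi> a x z - \<psi> a z x) * Dbe a a' y + (\<psi> a y z - \<psi> a z y) * Dbe a a' x))"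
  proof -
    have "dbar2 \<psi> a' x y z = (\<Sum>a\<in>UNIV. \<Sum>b\<in>UNIV. \<Sum>c\<in>UNIV. (1/2) * \<psi> a b c * (0 * kron a a'
       + wedge21 (\<lambda>p q. kron b p * kron c q - kron b q * kron c p) (\<lambda>p. Dbe a a' p) x y z))"
      by (simp only: dbar2_def d0)
    also have "\<dots> = (\<Sum>a\<in>UNIV. (1/2)*((\<psi> a x y - \<psi> a y x) * Dbe a a' z - (\<psi> a x z - \<psi> a z x) * Dbe a a' y + (\<psi> a y z - \<psi> a z y) * Dbe a a' x))"
      by (rule sum.cong[OF refl], rule wedge_sum)
    finally show ?thesis .
  qed
  also have "\<dots> = (if a' = I3 then -(1/2)*((\<psi> I2 x y - \<psi> I2 y x)*kron z I1
     - (\<psi> I2 x z - \<psi> I2 z x)*kron y I1 + (\<psi> I2 y z - \<psi> I2 z y)*kron x I1) else 0)"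
    unfolding Dbe_eq by (simp add: sum_i3 kron_def field_simps)
  finally show "dbar2 \<psi> a' x y z = (if a' = I3 then -(1/2)*((\<psi> I2 x y - \<psi> I2 y x)*kron z I1
     - (\<psi> I2 x z - \<psi> I2 z x)*kron y I1 + (\<psi> I2 y z - \<psi> I2 z y)*kron x I1) else 0)" .
qed


definition gg :: "A3 \<Rightarrow> i3 \<Rightarrow> i3 \<Rightarrow> complex" where
  "gg \<chi>' p q = \<chi>' I3 p q I1 - \<chi>' I3 p I1 q + \<chi>' I3 I1 p q"

definition cand2 :: "A3 \<Rightarrow> A2" where
  "cand2 \<chi>' = (\<lambda>a p q. if a = I2 then - (gg \<chi>' p q - gg \<chi>' q p) / 6 else 0)"

lemma alt2_rw: assumes "alt2 \<phi>"
  shows "\<phi> a I1 I1 = 0" "\<phi> a I2 I2 = 0" "\<phi> a I3 I3 = 0" "\<phi> a I2 I1 = - \<phi> a I1 I2"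
    "\<phi> a I3 I1 = - \<phi> a I1 I3" "\<phi> a I3 I2 = - \<phi> a I2 I3"
proof -
  have h: "\<And>a c d. \<phi> a c d = - \<phi> a d c" using assms unfolding alt2_def by blast
  have z: "\<And>x::complex. x = - x \<Longrightarrow> x = 0" by simp
  show "\<phi> a I1 I1 = 0" "\<phi> a I2 I2 = 0" "\<phi> a I3 I3 = 0" by (rule z, rule h)+
  show "\<phi> a I2 I1 = - \<phi> a I1 I2" "\<phi> a I3 I1 = - \<phi> a I1 I3" "\<phi> a I3 I2 = - \<phi> a I2 I3" by (rule h)+
qed
lemma ip3_dbar2: assumes "alt2 \<phi>"
  shows "ip3 (dbar2 \<phi>) \<chi>' = -(1/6) * (\<phi> I2 I1 I2 * (cnj (gg \<chi>' I1 I2) - cnj (gg \<chi>' I2 I1))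
     + \<phi> I2 I1 I3 * (cnj (gg \<chi>' I1 I3) - cnj (gg \<chi>' I3 I1)) + \<phi> I2 I2 I3 * (cnj (gg \<chi>' I2 I3) - cnj (gg \<chi>' I3 I2)))"
  unfolding ip3_def dbar2_eq gg_def using alt2_rw[OF assms]
  by (simp add: sum_i3 kron_def algebra_simps)

lemma ip2_cand2: assumes "alt2 \<phi>"
  shows "ip2 \<phi> (cand2 \<chi>') = -(1/6) * (\<phi> I2 I1 I2 * (cnj (gg \<chi>' I1 I2) - cnj (gg \<chi>' I2 I1))
     + \<phi> I2 I1 I3 * (cnj (gg \<chi>' I1 I3) - cnj (gg \<chi>' I3 I1)) + \<phi> I2 I2 I3 * (cnj (gg \<chi>' I2 I3) - cnj (gg \<chi>' I3 I2)))"
  unfolding ip2_def cand2_def using alt2_rw[OF assms]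
  by (simp add: sum_i3 algebra_simps diff_divide_distrib)


lemma alt2_cand2: "alt2 (cand2 \<chi>')"
  unfolding alt2_def cand2_def by (simp add: diff_divide_distrib)

lemma alt2_diff: "alt2 f \<Longrightarrow> alt2 g \<Longrightarrow> alt2 (\<lambda>a c d. f a c d - g a c d)"
  unfolding alt2_def
proof (intro allI impI)
  fix a c d
  assume hf: "\<forall>a c d. f a c d = - f a d c" and hg: "\<forall>a c d. g a c d = - g a d c"
  show "f a c d - g a c d = - (f a d c - g a d c)"
    using hf[rule_format, of a c d] hg[rule_format, of a c d] by simp
qed

lemma dbar2_adj_eq: "dbar2_adj \<chi>' = cand2 \<chi>'"
  unfolding dbar2_adj_def
proof (rule the_equality)
  show "alt2 (cand2 \<chi>') \<and> (\<forall>\<phi>. alt2 \<phi> \<longrightarrow> ip2 \<phi> (cand2 \<chi>') = ip3 (dbar2 \<phi>) \<chi>')"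
    using alt2_cand2 ip3_dbar2 ip2_cand2 by simp
  fix \<psi> assume h: "alt2 \<psi> \<and> (\<forall>\<phi>. alt2 \<phi> \<longrightarrow> ip2 \<phi> \<psi> = ip3 (dbar2 \<phi>) \<chi>')"
  define k where "k = (\<lambda>a c d. \<psi> a c d - cand2 \<chi>' a c d)"
  have ak: "alt2 k" unfolding k_def using h alt2_cand2 by (intro alt2_diff) auto
  have "ip2 k k = ip2 k \<psi> - ip2 k (cand2 \<chi>')" unfolding k_def by (rule ip2_diff2)
  also have "\<dots> = 0" using h ak ip3_dbar2[OF ak] ip2_cand2[OF ak] by simp
  finally have "k = (\<lambda>_ _ _. 0)" by (rule ip2_self)
  hence "\<forall>a c d. \<psi> a c d - cand2 \<chi>' a c d = 0" unfolding k_def by (simp add: fun_eq_iff)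
  thus "\<psi> = cand2 \<chi>'" by (simp add: fun_eq_iff)
qed

definition Pr :: "A2 \<Rightarrow> A2" where
  "Pr \<psi> = (\<lambda>a c d. if (a = I3 \<and> (c = I1) \<noteq> (d = I1)) \<or> (a = I2 \<and> c \<noteq> I1 \<and> d \<noteq> I1 \<and> c \<noteq> d) then \<psi> a c d else 0)"

lemma lap2_eq: assumes "alt2 \<psi>" shows "lap2 \<psi> = Pr \<psi>"
proof (intro ext)
  fix a c d
  show "lap2 \<psi> a c d = Pr \<psi> a c d"
    unfolding lap2_def dbar2_adj_eq dbar1_eq dbar1_adj_eq cand2_def gg_def dbar2_eq Pr_def
    using alt2_rw[OF assms]
    by (cases a; cases c; cases d; simp add: kron_def)
qed



lemma alt2_Pr: assumes "alt2 \<psi>" shows "alt2 (Pr \<psi>)"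
  unfolding alt2_def
proof (intro allI)
  fix a c d
  have "\<psi> a c d = - \<psi> a d c" using assms unfolding alt2_def by blast
  thus "Pr \<psi> a c d = - Pr \<psi> a d c"
    by (cases a; cases c; cases d; simp add: Pr_def)
qed

lemma Pr_idem: "Pr (Pr \<psi>) = Pr \<psi>"
  unfolding Pr_def by (intro ext) auto

lemma Pr_diff: "Pr (\<lambda>a c d. f a c d - g a c d) = (\<lambda>a c d. Pr f a c d - Pr g a c d)"
  unfolding Pr_def by (intro ext) auto

lemma ip2_Pr: assumes "Pr k = (\<lambda>_ _ _. 0)" shows "ip2 (Pr \<psi>) k = 0"
proof -
  have k0: "Pr k a c d = 0" for a c d using assms by (simp add: fun_eq_iff)
  have z: "Pr \<psi> a c d * cnj (k a c d) = 0" for a c d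
    using k0[of a c d] unfolding Pr_def by (auto split: if_splits)
  show ?thesis unfolding ip2_def z by simp
qed

lemma harm2_iff: "\<psi> \<in> harm2 \<longleftrightarrow> alt2 \<psi> \<and> Pr \<psi> = (\<lambda>_ _ _. 0)"
proof (cases "alt2 \<psi>")
  case True thus ?thesis by (simp add: harm2_def lap2_eq)
next
  case False thus ?thesis by (simp add: harm2_def)
qed

lemma Hproj2_eq: assumes "alt2 \<psi>" shows "Hproj2 \<psi> = (\<lambda>a c d. \<psi> a c d - Pr \<psi> a c d)"
  (is "_ = ?h0")
  unfolding Hproj2_def
proof (rule the_equality)
  have h0: "?h0 \<in> harm2"
    unfolding harm2_iff using assms alt2_Pr
    by (simp add: alt2_diff Pr_diff Pr_idem)
  have e: "(\<lambda>a c d. \<psi> a c d - ?h0 a c d) = Pr \<psi>" by (simp add: fun_eq_iff)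
  show "?h0 \<in> harm2 \<and> (\<forall>k\<in>harm2. ip2 (\<lambda>a c d. \<psi> a c d - ?h0 a c d) k = 0)"
    unfolding e
  proof (intro conjI ballI)
    show "?h0 \<in> harm2" by (rule h0)
    fix k assume "k \<in> harm2" thus "ip2 (Pr \<psi>) k = 0" using ip2_Pr harm2_iff by auto
  qed
  fix h assume hh: "h \<in> harm2 \<and> (\<forall>k\<in>harm2. ip2 (\<lambda>a c d. \<psi> a c d - h a c d) k = 0)"
  define k where "k = (\<lambda>a c d. ?h0 a c d - h a c d)"
  have kh: "k \<in> harm2"
    using h0 hh unfolding k_def harm2_iff by (simp add: alt2_diff Pr_diff)
  have eqk: "(\<lambda>a c d. (\<psi> a c d - h a c d) - (\<psi> a c d - ?h0 a c d)) = k"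
    by (simp add: k_def fun_eq_iff)
  have "ip2 (\<lambda>a c d. \<psi> a c d - h a c d) k - ip2 (\<lambda>a c d. \<psi> a c d - ?h0 a c d) k
     = ip2 (\<lambda>a c d. (\<psi> a c d - h a c d) - (\<psi> a c d - ?h0 a c d)) k" by (rule ip2_diff1[symmetric])
  hence "ip2 k k = ip2 (\<lambda>a c d. \<psi> a c d - h a c d) k - ip2 (\<lambda>a c d. \<psi> a c d - ?h0 a c d) k"
    by (simp only: eqk)
  also have "\<dots> = 0"
  proof -
    have t1: "ip2 (\<lambda>a c d. \<psi> a c d - h a c d) k = 0" using hh kh by blast
    have pk: "Pr k = (\<lambda>_ _ _. 0)" using kh unfolding harm2_iff by blast
    have t2: "ip2 (\<lambda>a c d. \<psi> a c d - ?h0 a c d) k = 0" unfolding e by (rule ip2_Pr[OF pk])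
    show ?thesis using t1 t2 by simp
  qed
  finally have "k = (\<lambda>_ _ _. 0)" by (rule ip2_self)
  thus "h = ?h0" unfolding k_def by (simp add: fun_eq_iff)
qed

lemma Green2_eq: assumes "alt2 \<psi>" shows "Green2 \<psi> = Pr \<psi>"
  unfolding Green2_def
proof (rule the_equality)
  have hp: "(\<lambda>a c d. \<psi> a c d - Hproj2 \<psi> a c d) = Pr \<psi>"
    by (simp add: Hproj2_eq[OF assms] fun_eq_iff)
  show "alt2 (Pr \<psi>) \<and> (\<forall>k\<in>harm2. ip2 (Pr \<psi>) k = 0) \<and> lap2 (Pr \<psi>) = (\<lambda>a c d. \<psi> a c d - Hproj2 \<psi> a c d)"
    unfolding hp
  proof (intro conjI ballI)
    show "alt2 (Pr \<psi>)" by (rule alt2_Pr[OF assms])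
    fix k assume "k \<in> harm2"
    hence "Pr k = (\<lambda>_ _ _. 0)" unfolding harm2_iff by blast
    thus "ip2 (Pr \<psi>) k = 0" by (rule ip2_Pr)
  next
    show "lap2 (Pr \<psi>) = Pr \<psi>" using lap2_eq[OF alt2_Pr[OF assms]] Pr_idem by simp
  qed
  fix \<eta> assume h: "alt2 \<eta> \<and> (\<forall>k\<in>harm2. ip2 \<eta> k = 0) \<and> lap2 \<eta> = (\<lambda>a c d. \<psi> a c d - Hproj2 \<psi> a c d)"
  hence pe: "Pr \<eta> = Pr \<psi>" using lap2_eq[of \<eta>] hp by simp
  define k where "k = (\<lambda>a c d. \<eta> a c d - Pr \<psi> a c d)"
  have kh: "k \<in> harm2"
    using h alt2_Pr[OF assms] pe unfolding k_def harm2_iff by (simp add: alt2_diff Pr_diff Pr_idem)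
  have "ip2 k k = ip2 \<eta> k - ip2 (Pr \<psi>) k" unfolding k_def by (rule ip2_diff1)
  also have "\<dots> = 0"
  proof -
    have pk: "Pr k = (\<lambda>_ _ _. 0)" using kh unfolding harm2_iff by blast
    have "ip2 \<eta> k = 0" using h kh by blast
    thus ?thesis using ip2_Pr[OF pk] by simp
  qed
  finally have "k = (\<lambda>_ _ _. 0)" by (rule ip2_self)
  thus "\<eta> = Pr \<psi>" unfolding k_def by (simp add: fun_eq_iff)
qed

lemma dstarG_eq: assumes "alt2 \<psi>"
  shows "dstarG \<psi> = (\<chi> i. if fst i = I2 \<and> snd i \<noteq> I1 then \<psi> I3 (snd i) I1 else 0)"
  unfolding dstarG_def Green2_eq[OF assms] dbar1_adj_eq vec_eq_iff
  using alt2_rw[OF assms] by (simp add: all_i3 Pr_def)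

lemma alt2_SN: "alt2 (SN \<phi> \<psi>)"
  unfolding alt2_def SN_eq by (simp add: algebra_simps)

lemma dstarG_SN: "dstarG (SN \<phi> \<psi>) = (\<chi> i. if i = (I2,I2) then -(\<phi>$(I3,I3)*\<psi>$(I1,I1) + \<psi>$(I3,I3)*\<phi>$(I1,I1)) else 0)"
  unfolding dstarG_eq[OF alt2_SN[of \<phi> \<psi>]] unfolding vec_eq_iff SN_eq
  by (simp add: all_i3 kron_def)



lemma kur_ge2: "r \<ge> 2 \<Longrightarrow> kur \<mu> r = (- 1/2 :: complex) *s (\<Sum>s\<in>{1..<r}. dstarG (SN (kur \<mu> s) (kur \<mu> (r - s))))"
  by (subst kur.simps) simp

lemma kur_0: "kur \<mu> 0 = 0"
  by (subst kur.simps) simp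

lemma kur_1: "kur \<mu> 1 = \<mu>"
  by (subst kur.simps) simp

lemma kur_entries: assumes "r \<ge> 2" shows "kur \<mu> r $ (I1,I1) = 0" "kur \<mu> r $ (I3,I3) = 0"
  unfolding kur_ge2[OF assms] by (simp_all add: dstarG_SN sum_component)

lemma kur_2: "kur \<mu> 2 = (\<chi> i. if i = (I2,I2) then \<mu>$(I1,I1) * \<mu>$(I3,I3) else 0)"
proof -
  have "{1..<2::nat} = {1}" by auto
  thus ?thesis unfolding kur_ge2[OF order_refl] by (simp add: kur_1 dstarG_SN vec_eq_iff)
qed

lemma kur_ge3: assumes "r \<ge> 3" shows "kur \<mu> r = 0"
proof -
  have "dstarG (SN (kur \<mu> s) (kur \<mu> (r - s))) = 0" if "s \<in> {1..<r}" for s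
  proof (cases "s \<ge> 2")
    case True thus ?thesis using kur_entries[OF True] by (simp add: dstarG_SN vec_eq_iff del: kur.simps)
  next
    case False
    hence "r - s \<ge> 2" using that assms by auto
    thus ?thesis using kur_entries[of "r - s"] by (simp add: dstarG_SN vec_eq_iff del: kur.simps)
  qed
  thus ?thesis using assms by (simp add: kur_ge2)
qed

lemma kur_sums: "kur \<mu> sums (\<mu> + kur \<mu> 2)"
proof -
  have "kur \<mu> sums (\<Sum>n\<in>{1,2}. kur \<mu> n)"
  proof (rule sums_finite)
    fix n :: nat assume "n \<notin> {1,2}"
    hence "n = 0 \<or> n \<ge> 3" by auto
    thus "kur \<mu> n = 0" using kur_0 kur_ge3 by auto
  qed simp
  thus ?thesis by (simp add: kur_1)
qed

lemma integrable_iff: "integrable \<mu> \<longleftrightarrow>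
   (\<forall>a c d. dbar1 (\<mu> + kur \<mu> 2) a c d + (1/2) * SN (\<mu> + kur \<mu> 2) (\<mu> + kur \<mu> 2) a c d = 0)"
  using kur_sums[of \<mu>] unfolding integrable_def by (simp add: sums_summable sums_unique[symmetric])



lemma cJ_e: "cJ (e a) = \<i> *s e a"
  unfolding cJ_def vec_eq_iff
  by (cases a; simp add: all_rb sum_rb e_comp J1b_def rvec_def)

lemma frame_dual: "\<omega> a (e b) = kron a b \<and> \<omega> a (eb b) = 0 \<and> \<omega>b a (eb b) = kron a b \<and> \<omega>b a (e b) = 0"
  by (simp add: omega_e omega_eb omegab_eb omegab_e)

lemma table: "cbr (fr s a) (fr t b) =
      (if (s, a, t, b) = (True, I1, False, I2) then - e I3
       else if (s, a, t, b) = (False, I2, True, I1) then e I3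
       else if (s, a, t, b) = (True, I2, False, I1) then eb I3
       else if (s, a, t, b) = (False, I1, True, I2) then - eb I3
       else 0)"
  by (cases s; cases t; simp add: fr_def cbr_ee cbr_ebeb cbr_ebe cbr_eeb)

lemma closed1_iff: "closed1 \<mu> \<longleftrightarrow> \<mu> $ (I2, I2) = 0 \<and> \<mu> $ (I2, I3) = 0"
  unfolding closed1_def dbar1_eq fun_eq_iff by (auto simp: all_i3 kron_def)

lemma ip1_dbar0: "ip1 \<mu> (dbar0 v) = \<mu> $ (I3, I1) * cnj (- v $ I2)"
  unfolding ip1_def dbar0_eq by (simp add: sum_i3i3 sum_i3)

lemma harmonic1_iff: "harmonic1 \<mu> \<longleftrightarrow> closed1 \<mu> \<and> \<mu> $ (I3, I1) = 0"
proof -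
  have "(\<forall>v. ip1 \<mu> (dbar0 v) = 0) \<longleftrightarrow> \<mu> $ (I3, I1) = 0"
  proof
    assume "\<forall>v. ip1 \<mu> (dbar0 v) = 0"
    hence "ip1 \<mu> (dbar0 (\<chi> a. 1)) = 0" by blast
    thus "\<mu> $ (I3, I1) = 0" by (simp add: ip1_dbar0)
  qed (simp add: ip1_dbar0)
  thus ?thesis unfolding harmonic1_def by blast
qed

lemma condA_iff: "conditionA \<mu> \<longleftrightarrow> \<mu> $ (I1, I1) = 0 \<and> \<mu> $ (I1, I3) = 0"
  unfolding conditionA_def Fc_eq by simp

lemma range_dbar0: "range dbar0 = {x::A1. \<forall>i. i \<notin> {(I3,I1)} \<longrightarrow> x $ i = 0}"
proof (intro set_eqI iffI)
  fix x :: A1 assume "x \<in> range dbar0"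
  thus "x \<in> {x. \<forall>i. i \<notin> {(I3,I1)} \<longrightarrow> x $ i = 0}" by (auto simp: dbar0_eq)
next
  fix x :: A1 assume h: "x \<in> {x. \<forall>i. i \<notin> {(I3,I1)} \<longrightarrow> x $ i = 0}"
  have "x = dbar0 (\<chi> a. if a = I2 then - x $ (I3,I1) else 0)"
    using h by (auto simp: dbar0_eq vec_eq_iff)
  thus "x \<in> range dbar0" by blast
qed

lemma dim_range_dbar0: "vec.dim (range dbar0) = 1"
  unfolding range_dbar0 dim_substandard_cart by simp

lemma sumset_eq: assumes "range dbar0 \<subseteq> S" and "\<And>x y. x \<in> S \<Longrightarrow> y \<in> range dbar0 \<Longrightarrow> x + y \<in> S"
  shows "{x + y | x y. x \<in> S \<and> y \<in> range dbar0} = S"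
proof (intro set_eqI iffI)
  fix z assume "z \<in> {x + y | x y. x \<in> S \<and> y \<in> range dbar0}"
  thus "z \<in> S" using assms(2) by blast
next
  fix z assume "z \<in> S"
  moreover have "(0::A1) \<in> range dbar0" by (rule range_eqI[of _ _ 0]) (simp add: dbar0_eq vec_eq_iff)
  ultimately show "z \<in> {x + y | x y. x \<in> S \<and> y \<in> range dbar0}" by force
qed

lemma dimH1: "dim_H1 = 6"
proof -
  let ?d = "{(I1,I1),(I1,I2),(I1,I3),(I2,I1),(I3,I1),(I3,I2),(I3,I3)}"
  have S: "{\<mu>. closed1 \<mu>} = {x. \<forall>i. i \<notin> ?d \<longrightarrow> x $ i = 0}"
    by (auto simp: closed1_iff all_i3)
  have se: "{x + y | x y. x \<in> {\<mu>. closed1 \<mu>} \<and> y \<in> range dbar0} = {\<mu>. closed1 \<mu>}"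
    by (rule sumset_eq) (auto simp: closed1_iff dbar0_eq)
  have "dim_H1 = vec.dim {\<mu>. closed1 \<mu>} - vec.dim (range dbar0)"
    by (simp only: dim_H1_def dim_in_H1_def se)
  also have "\<dots> = 6" unfolding S dim_substandard_cart dim_range_dbar0 by simp
  finally show ?thesis .
qed

lemma dimA: "dim_in_H1 {\<mu>. closed1 \<mu> \<and> conditionA \<mu>} = 4"
proof -
  let ?d = "{(I1,I2),(I2,I1),(I3,I1),(I3,I2),(I3,I3)}"
  have S: "{\<mu>. closed1 \<mu> \<and> conditionA \<mu>} = {x. \<forall>i. i \<notin> ?d \<longrightarrow> x $ i = 0}"
    by (auto simp: closed1_iff condA_iff all_i3)
  have se: "{x + y | x y. x \<in> {\<mu>. closed1 \<mu> \<and> conditionA \<mu>} \<and> y \<in> range dbar0} = {\<mu>. closed1 \<mu> \<and> conditionA \<mu>}"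
    by (rule sumset_eq) (auto simp: closed1_iff condA_iff dbar0_eq)
  have "dim_in_H1 {\<mu>. closed1 \<mu> \<and> conditionA \<mu>} = vec.dim {\<mu>. closed1 \<mu> \<and> conditionA \<mu>} - vec.dim (range dbar0)"
    by (simp only: dim_in_H1_def se)
  also have "\<dots> = 4" unfolding S dim_substandard_cart dim_range_dbar0 by simp
  finally show ?thesis .
qed



lemma integrable_harm: assumes "closed1 \<mu>" shows "integrable \<mu> \<longleftrightarrow> \<mu> $ (I1, I3) = 0"
proof -
  have c: "\<mu> $ (I2, I2) = 0" "\<mu> $ (I2, I3) = 0" using assms closed1_iff by auto
  show ?thesis unfolding integrable_iff
  proof
    assume "\<forall>a c d. dbar1 (\<mu> + kur \<mu> 2) a c d + 1 / 2 * SN (\<mu> + kur \<mu> 2) (\<mu> + kur \<mu> 2) a c d = 0"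
    hence "dbar1 (\<mu> + kur \<mu> 2) I1 I2 I3 + 1 / 2 * SN (\<mu> + kur \<mu> 2) (\<mu> + kur \<mu> 2) I1 I2 I3 = 0" by blast
    hence "\<mu> $ (I1, I3) * \<mu> $ (I1, I3) = 0" by (simp add: dbar1_eq SN_eq kur_2 kron_def del: kur.simps)
    thus "\<mu> $ (I1, I3) = 0" by simp
  next
    assume "\<mu> $ (I1, I3) = 0"
    thus "\<forall>a c d. dbar1 (\<mu> + kur \<mu> 2) a c d + 1 / 2 * SN (\<mu> + kur \<mu> 2) (\<mu> + kur \<mu> 2) a c d = 0"
      using c by (simp add: dbar1_eq SN_eq kur_2 kron_def all_i3 del: kur.simps)
  qed
qed

lemma dim_Kur: "vec.dim {\<mu>. harmonic1 \<mu> \<and> integrable \<mu>} = 5"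
proof -
  let ?d = "{(I1,I1),(I1,I2),(I2,I1),(I3,I2),(I3,I3)}"
  have S: "{\<mu>. harmonic1 \<mu> \<and> integrable \<mu>} = {x. \<forall>i. i \<notin> ?d \<longrightarrow> x $ i = 0}"
  proof (intro set_eqI)
    fix x :: A1
    show "x \<in> {\<mu>. harmonic1 \<mu> \<and> integrable \<mu>} \<longleftrightarrow> x \<in> {x. \<forall>i. i \<notin> ?d \<longrightarrow> x $ i = 0}"
    proof (cases "closed1 x")
      case True thus ?thesis using integrable_harm[OF True] harmonic1_iff closed1_iff by (auto simp: all_i3)
    next
      case False thus ?thesis using harmonic1_iff closed1_iff by (auto simp: all_i3)
    qed
  qed
  show ?thesis unfolding S dim_substandard_cart by simp
qed


theorem mainTheorem14:
  shows
  \<comment> \<open>(0) the frame: T_a are (1,0), omega/conj omega are dual, bracket table\<close>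
  "(\<forall>a. cJ (e a) = \<i> *s e a) \<and>
   (\<forall>a b. \<omega> a (e b) = kron a b \<and> \<omega> a (eb b) = 0 \<and> \<omega>b a (eb b) = kron a b \<and> \<omega>b a (e b) = 0) \<and>
   (\<forall>s a t b. cbr (fr s a) (fr t b) =
      (if (s, a, t, b) = (True, I1, False, I2) then - e I3
       else if (s, a, t, b) = (False, I2, True, I1) then e I3
       else if (s, a, t, b) = (True, I2, False, I1) then eb I3
       else if (s, a, t, b) = (False, I1, True, I2) then - eb I3
       else 0)) \<and>
  \<comment> \<open>(i)\<close>
   (\<forall>\<mu>. closed1 \<mu> \<longleftrightarrow> \<mu> $ (I2, I2) = 0 \<and> \<mu> $ (I2, I3) = 0) \<and>
   dim_H1 = 6 \<and>
   (\<forall>\<mu>. harmonic1 \<mu> \<longleftrightarrow> closed1 \<mu> \<and> \<mu> $ (I3, I1) = 0) \<and>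
  \<comment> \<open>(ii)\<close>
   (\<forall>\<mu>. closed1 \<mu> \<longrightarrow> (conditionA \<mu> \<longleftrightarrow> \<mu> $ (I1, I1) = 0 \<and> \<mu> $ (I1, I3) = 0)) \<and>
   dim_in_H1 {\<mu>. closed1 \<mu> \<and> conditionA \<mu>} = 4 \<and>
  \<comment> \<open>(iii)\<close>
   (\<forall>\<mu>. harmonic1 \<mu> \<longrightarrow>
      kur \<mu> 2 = (\<chi> i. if i = (I2, I2) then \<mu> $ (I1, I1) * \<mu> $ (I3, I3) else 0) \<and>
      (integrable \<mu> \<longleftrightarrow> \<mu> $ (I1, I3) = 0)) \<and>
   vec.dim {\<mu>. harmonic1 \<mu> \<and> integrable \<mu>} = 5"
  proof -
  have h2: "\<forall>\<mu>. harmonic1 \<mu> \<longrightarrow>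
      kur \<mu> 2 = (\<chi> i. if i = (I2, I2) then \<mu> $ (I1, I1) * \<mu> $ (I3, I3) else 0) \<and>
      (integrable \<mu> \<longleftrightarrow> \<mu> $ (I1, I3) = 0)"
    using kur_2 integrable_harm harmonic1_iff by blast
  show ?thesis
    using cJ_e frame_dual table closed1_iff dimH1 harmonic1_iff condA_iff dimA h2 dim_Kur
    by blast
qed

end
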